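(* There exists an integer $n_0$ such that for every integer $n\ge n_0$ there exists a regular graph on $n$ vertices that is $K_3$-saturated (that is, $\mathrm{rsat}(n,K_3)$ exists for every $n\ge n_0$).
   Context: All graphs are finite and simple. For a graph $F$, a graph $G$ is $F$-saturated if $G$ contains no copy of $F$ (as a subgraph), but adding any edge between two non-adjacent vertices of $G$ creates a copy of $F$. A graph is regular if all its vertices have the same degree. $\mathrm{rsat}(n,F)$ denotes the smallest number of edges of a regular $n$-vertex $F$-saturated graph, if such a graph exists; we say $\mathrm{rsat}(n,F)$ exists if at least one such graph exists. *)

theory Defs
  imports Main
begin

definition simple_graph :: "'a set \<Rightarrow> ('a \<Rightarrow> 'a \<Rightarrow> bool) \<Rightarrow> bool" where
  "simple_graph V E \<longleftrightarrow> finite V \<and> (\<forall>u v. E u v \<longrightarrow> u \<in> V \<and> v \<in> V)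
     \<and> (\<forall>u v. E u v \<longrightarrow> E v u) \<and> (\<forall>v. \<not> E v v)"

definition degree :: "'a set \<Rightarrow> ('a \<Rightarrow> 'a \<Rightarrow> bool) \<Rightarrow> 'a \<Rightarrow> nat" where
  "degree V E v = card {u \<in> V. E v u}"

definition regular_graph :: "'a set \<Rightarrow> ('a \<Rightarrow> 'a \<Rightarrow> bool) \<Rightarrow> bool" where
  "regular_graph V E \<longleftrightarrow> (\<exists>d. \<forall>v\<in>V. degree V E v = d)"

definition has_K3 :: "'a set \<Rightarrow> ('a \<Rightarrow> 'a \<Rightarrow> bool) \<Rightarrow> bool" where
  "has_K3 V E \<longleftrightarrow> (\<exists>a\<in>V. \<exists>b\<in>V. \<exists>c\<in>V. a \<noteq> b \<and> b \<noteq> c \<and> a \<noteq> c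
      \<and> E a b \<and> E b c \<and> E a c)"

definition add_edge :: "('a \<Rightarrow> 'a \<Rightarrow> bool) \<Rightarrow> 'a \<Rightarrow> 'a \<Rightarrow> ('a \<Rightarrow> 'a \<Rightarrow> bool)" where
  "add_edge E u v = (\<lambda>x y. E x y \<or> (x = u \<and> y = v) \<or> (x = v \<and> y = u))"

definition K3_saturated :: "'a set \<Rightarrow> ('a \<Rightarrow> 'a \<Rightarrow> bool) \<Rightarrow> bool" where
  "K3_saturated V E \<longleftrightarrow> \<not> has_K3 V E \<and>
     (\<forall>u\<in>V. \<forall>v\<in>V. u \<noteq> v \<and> \<not> E u v \<longrightarrow> has_K3 V (add_edge E u v))"

end

theory Submission
  imports Defs
begin

definition inD :: "int \<Rightarrow> int \<Rightarrow> int \<Rightarrow> bool" where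
  "inD N K j \<longleftrightarrow> (K+1 \<le> j \<and> j \<le> 2*K+1) \<or> (N-2*K-1 \<le> j \<and> j \<le> N-K-1)"

definition GE :: "nat \<Rightarrow> nat \<Rightarrow> nat \<Rightarrow> nat \<Rightarrow> bool" where
  "GE n k x y \<longleftrightarrow> x < n \<and> y < n \<and> inD (int n) (int k) ((int y - int x) mod int n)"

lemma mod2N:
  fixes s N :: int
  assumes "0 \<le> s" "s < 2*N"
  shows "s mod N = (if s < N then s else s - N)"
proof (cases "s < N")
  case True then show ?thesis using assms by simp
next
  case False
  then have "s mod N = (s - N) mod N" by (simp add: mod_diff_right_eq[symmetric])
  also have "\<dots> = s - N" using assms False by (intro mod_pos_pos_trivial) auto
  finally show ?thesis using False by simp
qed

lemma param:
  fixes N K :: int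
  assumes "7*K \<le> N" "N \<le> 7*K+6" "N \<ge> 28"
  shows "6*K+4 \<le> N" "N \<le> 8*K+5" "K \<ge> 4"
  using assms by linarith+

lemma sumfree:
  fixes N K p q :: int
  assumes "6*K+4 \<le> N" "N \<le> 8*K+5" "K \<ge> 4" "inD N K p" "inD N K q"
  shows "\<not> inD N K ((p+q) mod N)"
proof -
  have "0 \<le> p+q" "p+q < 2*N" using assms unfolding inD_def by linarith+
  then have m: "(p+q) mod N = (if p+q < N then p+q else p+q-N)" by (rule mod2N)
  show ?thesis unfolding m using assms unfolding inD_def by (auto split: if_splits)
qed

lemma complete:
  fixes N K r :: int
  assumes "6*K+4 \<le> N" "N \<le> 8*K+5" "K \<ge> 4" "0 < r" "r < N" "\<not> inD N K r"
  shows "\<exists>p q. inD N K p \<and> inD N K q \<and> (p+q) mod N = r"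
proof -
  consider "r \<le> K" | "2*K+2 \<le> r \<and> r \<le> 4*K+2" | "4*K+3 \<le> r \<and> r \<le> N-2*K-2" | "N-K \<le> r"
    using assms unfolding inD_def by linarith
  then show ?thesis
  proof cases
    case 1
    have "(2*K+1 + (N + r - 2*K - 1)) mod N = r" using assms by simp
    moreover have "inD N K (2*K+1)" "inD N K (N + r - 2*K - 1)"
      using 1 assms unfolding inD_def by linarith+
    ultimately show ?thesis by blast
  next
    case 2
    have a: "2*(r div 2) \<le> r" "r \<le> 2*(r div 2) + 1" by linarith+
    have "(r div 2 + (r - r div 2)) mod N = r" using assms by simp
    moreover have "inD N K (r div 2)" "inD N K (r - r div 2)"
      using 2 a assms unfolding inD_def by linarith+
    ultimately show ?thesis by blast
  next
    case 3
    have a: "2*((r+N) div 2) \<le> r+N" "r+N \<le> 2*((r+N) div 2) + 1" by linarith+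
    have "((r+N) div 2 + (r + N - (r+N) div 2)) mod N = r" using assms by simp
    moreover have "inD N K ((r+N) div 2)" "inD N K (r + N - (r+N) div 2)"
      using 3 a assms unfolding inD_def by linarith+
    ultimately show ?thesis by blast
  next
    case 4
    have "(N-2*K-1 + (r - N + 2*K + 1)) mod N = r" using assms by simp
    moreover have "inD N K (N-2*K-1)" "inD N K (r - N + 2*K + 1)"
      using 4 assms unfolding inD_def by linarith+
    ultimately show ?thesis by blast
  qed
qed

theorem theorem1p1:
  shows "\<exists>n0::nat. \<forall>n\<ge>n0. \<exists>E :: nat \<Rightarrow> nat \<Rightarrow> bool.
           simple_graph {0..<n} E \<and> regular_graph {0..<n} E \<and> K3_saturated {0..<n} E"
proof (intro exI allI impI)
  fix n :: nat
  assume n: "28 \<le> n"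
  define k where "k = n div 7"
  define N where "N = int n"
  define K where "K = int k"
  have P: "6*K+4 \<le> N" "N \<le> 8*K+5" "K \<ge> 4"
    using param[of K N] n unfolding K_def N_def k_def by linarith+
  have Npos: "N > 0" using P by linarith
  let ?E = "GE n k"
  have E_iff: "?E x y \<longleftrightarrow> x < n \<and> y < n \<and> inD N K ((int y - int x) mod N)" for x y
    unfolding GE_def N_def K_def by simp
  have D0: "inD N K j \<Longrightarrow> 0 < j \<and> j < N" for j using P unfolding inD_def by linarith
  have Dneg: "inD N K j \<Longrightarrow> inD N K (N - j)" for j using P unfolding inD_def by linarith
  have sym: "?E x y \<Longrightarrow> ?E y x" for x y
  proof -
    assume e: "?E x y"
    let ?j = "(int y - int x) mod N"
    have j: "inD N K ?j" "x < n" "y < n" using e E_iff by auto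
    have "?j \<noteq> 0" using D0[OF j(1)] by simp
    have "(- (int y - int x)) mod N = N - ?j" using \<open>?j \<noteq> 0\<close> zmod_zminus1_eq_if[of "int y - int x" N] by simp
    then have "(int x - int y) mod N = N - ?j" by (metis minus_diff_eq)
    then show ?thesis using E_iff j Dneg by auto
  qed
  have irr: "\<not> ?E v v" for v using E_iff D0 by auto
  have simple: "simple_graph {0..<n} ?E"
    unfolding simple_graph_def using sym irr E_iff by auto
  have deg: "degree {0..<n} ?E v = card {j. inD N K j}" if v: "v < n" for v
  proof -
    define f where "f u = (int u - int v) mod N" for u
    let ?A = "{u \<in> {0..<n}. ?E v u}"
    have inj: "inj_on f ?A"
    proof
      fix a b assume a: "a \<in> ?A" and b: "b \<in> ?A" and eq: "f a = f b"
      have "(int a - int v + int v) mod N = (int b - int v + int v) mod N"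
        using eq unfolding f_def by (metis mod_add_left_eq)
      then have "int a mod N = int b mod N" by simp
      moreover have "int a mod N = int a" "int b mod N = int b" using a b unfolding N_def by auto
      ultimately show "a = b" by simp
    qed
    have img: "f ` ?A = {j. inD N K j}"
    proof
      show "f ` ?A \<subseteq> {j. inD N K j}" unfolding f_def using E_iff by auto
    next
      show "{j. inD N K j} \<subseteq> f ` ?A"
      proof
        fix j assume "j \<in> {j. inD N K j}"
        then have j: "inD N K j" by simp
        define u where "u = nat ((int v + j) mod N)"
        have u0: "int u = (int v + j) mod N" unfolding u_def using Npos by simp
        have un: "u < n" using u0 Npos unfolding N_def
          by (metis of_nat_less_iff pos_mod_bound)
        have "f u = ((int v + j) mod N - int v) mod N" unfolding f_def u0 by simp
        also have "\<dots> = (int v + j - int v) mod N" by (simp add: mod_diff_left_eq)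
        also have "\<dots> = j" using D0[OF j] by simp
        finally have fu: "f u = j" .
        then have "u \<in> ?A" using E_iff un v j unfolding f_def by auto
        then show "j \<in> f ` ?A" using fu by blast
      qed
    qed
    have "degree {0..<n} ?E v = card ?A" unfolding degree_def by simp
    also have "\<dots> = card (f ` ?A)" using card_image[OF inj] by simp
    finally show ?thesis using img by simp
  qed
  have reg: "regular_graph {0..<n} ?E"
    unfolding regular_graph_def using deg by auto
  have nok3: "\<not> has_K3 {0..<n} ?E"
  proof
    assume "has_K3 {0..<n} ?E"
    then obtain a b c where e: "?E a b" "?E b c" "?E a c" unfolding has_K3_def by blast
    let ?p = "(int b - int a) mod N" and ?q = "(int c - int b) mod N"
    have pq: "inD N K ?p" "inD N K ?q" "inD N K ((int c - int a) mod N)" using e E_iff by auto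
    have "(int c - int a) mod N = ((int b - int a) + (int c - int b)) mod N" by simp
    also have "\<dots> = (?p + ?q) mod N" by (simp add: mod_add_eq)
    finally show False using sumfree[OF P pq(1,2)] pq(3) by simp
  qed
  have sat: "has_K3 {0..<n} (add_edge ?E u v)"
    if u: "u \<in> {0..<n}" and v: "v \<in> {0..<n}" and ne: "u \<noteq> v" and ne2: "\<not> ?E u v" for u v
  proof -
    let ?r = "(int v - int u) mod N"
    have r0: "0 \<le> ?r" "?r < N" using Npos by simp_all
    have rne: "?r \<noteq> 0"
    proof
      assume "?r = 0"
      then have "(int v - int u + int u) mod N = (0 + int u) mod N" by (metis mod_add_left_eq)
      then have "int v mod N = int u mod N" by simp
      then show False using u v ne unfolding N_def by simp
    qed
    have rD: "\<not> inD N K ?r" using ne2 E_iff u v by auto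
    obtain p q where pq: "inD N K p" "inD N K q" "(p+q) mod N = ?r"
      using complete[OF P _ r0(2) rD] r0(1) rne by force
    define w where "w = nat ((int u + p) mod N)"
    have w0: "int w = (int u + p) mod N" unfolding w_def using Npos by simp
    have wn: "w < n" using w0 Npos unfolding N_def
      by (metis of_nat_less_iff pos_mod_bound)
    have "(int w - int u) mod N = ((int u + p) mod N - int u) mod N" unfolding w0 by simp
    also have "\<dots> = (int u + p - int u) mod N" by (simp add: mod_diff_left_eq)
    also have "\<dots> = p" using D0[OF pq(1)] by simp
    finally have e1: "(int w - int u) mod N = p" .
    have "(int v - int w) mod N = (int v - (int u + p) mod N) mod N" unfolding w0 by simp
    also have "\<dots> = (int v - (int u + p)) mod N" by (simp add: mod_diff_right_eq)
    also have "\<dots> = ((int v - int u) - p) mod N" by (simp add: algebra_simps)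
    also have "\<dots> = (?r - p) mod N" by (simp add: mod_diff_left_eq)
    also have "\<dots> = ((p + q) mod N - p) mod N" using pq(3) by simp
    also have "\<dots> = (p + q - p) mod N" by (simp add: mod_diff_left_eq)
    also have "\<dots> = q" using D0[OF pq(2)] by simp
    finally have e2: "(int v - int w) mod N = q" .
    have E1: "?E u w" using E_iff e1 pq(1) u wn by auto
    have E2: "?E w v" using E_iff e2 pq(2) v wn by auto
    have uw: "u \<noteq> w" using E1 irr by auto
    have wv: "w \<noteq> v" using E2 irr by auto
    have "u \<in> {0..<n}" "w \<in> {0..<n}" "v \<in> {0..<n}" using u v wn by auto
    then show ?thesis unfolding has_K3_def add_edge_def
      using uw wv ne E1 E2 by blast
  qed
  show "simple_graph {0..<n} ?E \<and> regular_graph {0..<n} ?E \<and> K3_saturated {0..<n} ?E"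
    using simple reg nok3 sat unfolding K3_saturated_def by blast
qed

end
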